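(* Let $M$ be an $A\mathcal{V}$-module with representation $\rho:\mathcal{V}\to\mathfrak{gl}(M)$ and let $s\ge0$. Then $\rho\in\mathrm{Diff}_s(\mathcal{V},\mathrm{End}_\Bbbk(M))$ (i.e. $M$ is $s$-differentiable) if and only if $\mathfrak{m}^s\mathcal{L}_+$ annihilates $M$, where $\mathcal{L}_+$ acts on $M$ by $X^m\frac{\partial}{\partial X_p}\cdot v=\sum_{0\le k\le m}(-1)^{|k|}\binom{m}{k}x^k\rho\!\left(x^{m-k}\frac{\partial}{\partial x_p}\right)v$.
   Context: $\Bbbk$ algebraically closed, characteristic $0$; $A=\Bbbk[x_1,\dots,x_n]$; $\mathcal{V}=\mathrm{Der}(A)$. An $A\mathcal{V}$-module is an $A$-module and $\mathcal{V}$-module $M$ with $\eta(fm)=\eta(f)m+f(\eta m)$; $\rho$ is the action map of $\mathcal{V}$. $\mathcal{L}=\mathrm{Der}(\Bbbk[X_1,\dots,X_n])$, $\mathfrak{m}=(X_1,\dots,X_n)\subset\Bbbk[X_1,\dots,X_n]$, $\mathcal{L}_+=\mathfrak{m}\mathcal{L}$, so $\mathfrak{m}^s\mathcal{L}_+$ is spanned by $X^k\partial/\partial X_i$ with $|k|\ge s+1$; the stated formula (multi-index notation, $\binom{m}{k}=\prod\binom{m_i}{k_i}$) defines an $\mathcal{L}_+$-action commuting with that of the Weyl algebra, coming from an isomorphism $A\#U(\mathcal{V})\cong\mathcal{D}\otimes U(\mathcal{L}_+)$. Differential operators: for a commutative $\Bbbk$-algebra $R$ and $R$-modules $M',N'$,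 $\delta(f)D=D\circ f-f\circ D$ on $\mathrm{Hom}_\Bbbk(M',N')$; $\mathrm{Diff}_{-1}=0$, $\mathrm{Diff}_{s+1}(M',N')=\{D:\delta(f)D\in\mathrm{Diff}_s(M',N')\ \forall f\in R\}$; thus $D\in\mathrm{Diff}_s$ iff $\delta(f_1)\cdots\delta(f_{s+1})D=0$ for all $f_i$. Here $R=A$, $\mathcal{V}$ is an $A$-module via $(f\eta)(g)=f\eta(g)$, and $\mathrm{End}_\Bbbk(M)$ is an $A$-module via $f\cdot T=f\circ T$, so $(\delta(f)\rho)(\eta)=\rho(f\eta)-f\circ\rho(\eta)$. $M$ is called $s$-differentiable if $\rho\in\mathrm{Diff}_s(\mathcal{V},\mathrm{End}_\Bbbk(M))$. *)

theory Defs
  imports "HOL-Library.Poly_Mapping" "HOL-Computational_Algebra.Polynomial"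
begin

text \<open>The polynomial ring A = k[x_i : i in 'n], with 'n a finite type of n variables.
  Monomials (multi-indices) are finitely supported maps 'n to nat.\<close>

type_synonym ('n, 'k) mpoly = "('n \<Rightarrow>\<^sub>0 nat) \<Rightarrow>\<^sub>0 'k"

definition alg_closed :: "'k::field itself \<Rightarrow> bool" where
  "alg_closed _ \<longleftrightarrow> (\<forall>p :: 'k poly. degree p \<ge> 1 \<longrightarrow> (\<exists>x. poly p x = 0))"

definition cst :: "'k::comm_ring_1 \<Rightarrow> ('n, 'k) mpoly" where
  "cst c = Poly_Mapping.single 0 c"

definition xpow :: "('n \<Rightarrow>\<^sub>0 nat) \<Rightarrow> ('n, 'k::comm_ring_1) mpoly" where
  "xpow a = Poly_Mapping.single a 1"

definition pderiv_var :: "'n \<Rightarrow> ('n, 'k::comm_ring_1) mpoly \<Rightarrow> ('n, 'k) mpoly" where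
  "pderiv_var p f = (\<Sum>a\<in>Poly_Mapping.keys f.
      (Poly_Mapping.single (a - Poly_Mapping.single p (1::nat)) (of_nat (Poly_Mapping.lookup a p) * Poly_Mapping.lookup f a) :: ('n, 'k) mpoly))"

definition is_derivation :: "(('n, 'k::comm_ring_1) mpoly \<Rightarrow> ('n, 'k) mpoly) \<Rightarrow> bool" where
  "is_derivation D \<longleftrightarrow>
     (\<forall>f g. D (f + g) = D f + D g) \<and>
     (\<forall>c f. D (cst c * f) = cst c * D f) \<and>
     (\<forall>f g. D (f * g) = f * D g + g * D f)"

definition Der :: "(('n, 'k::comm_ring_1) mpoly \<Rightarrow> ('n, 'k) mpoly) set" where
  "Der = {D. is_derivation D}"

definition A_module :: "(('n, 'k::comm_ring_1) mpoly \<Rightarrow> 'm::ab_group_add \<Rightarrow> 'm) \<Rightarrow> bool" where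
  "A_module act \<longleftrightarrow>
     (\<forall>v. act 1 v = v) \<and>
     (\<forall>f g v. act (f * g) v = act f (act g v)) \<and>
     (\<forall>f g v. act (f + g) v = act f v + act g v) \<and>
     (\<forall>f v w. act f (v + w) = act f v + act f w)"

definition AV_module ::
  "(('n, 'k::comm_ring_1) mpoly \<Rightarrow> 'm::ab_group_add \<Rightarrow> 'm) \<Rightarrow>
   ((('n, 'k) mpoly \<Rightarrow> ('n, 'k) mpoly) \<Rightarrow> 'm \<Rightarrow> 'm) \<Rightarrow> bool" where
  "AV_module act rho \<longleftrightarrow>
     A_module act \<and>
     (\<forall>\<eta>\<in>Der. \<forall>v w. rho \<eta> (v + w) = rho \<eta> v + rho \<eta> w) \<and>
     (\<forall>\<eta>\<in>Der. \<forall>c v. rho \<eta> (act (cst c) v) = act (cst c) (rho \<eta> v)) \<and>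
     (\<forall>\<eta>\<in>Der. \<forall>\<zeta>\<in>Der. \<forall>v. rho (\<lambda>f. \<eta> f + \<zeta> f) v = rho \<eta> v + rho \<zeta> v) \<and>
     (\<forall>\<eta>\<in>Der. \<forall>c v. rho (\<lambda>f. cst c * \<eta> f) v = act (cst c) (rho \<eta> v)) \<and>
     (\<forall>\<eta>\<in>Der. \<forall>\<zeta>\<in>Der. \<forall>v.
        rho (\<lambda>f. \<eta> (\<zeta> f) - \<zeta> (\<eta> f)) v = rho \<eta> (rho \<zeta> v) - rho \<zeta> (rho \<eta> v)) \<and>
     (\<forall>\<eta>\<in>Der. \<forall>f v. rho \<eta> (act f v) = act (\<eta> f) v + act f (rho \<eta> v))"

definition delta ::
  "(('n, 'k::comm_ring_1) mpoly \<Rightarrow> 'm::ab_group_add \<Rightarrow> 'm) \<Rightarrow> ('n, 'k) mpoly \<Rightarrow>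
   ((('n, 'k) mpoly \<Rightarrow> ('n, 'k) mpoly) \<Rightarrow> 'm \<Rightarrow> 'm) \<Rightarrow>
   ((('n, 'k) mpoly \<Rightarrow> ('n, 'k) mpoly) \<Rightarrow> 'm \<Rightarrow> 'm)" where
  "delta act f D = (\<lambda>\<eta> v. D (\<lambda>g. f * \<eta> g) v - act f (D \<eta> v))"

text \<open>Diff_s(V, End_k(M)) as in the paper: Diff_{-1} = 0,
  Diff_{s+1} = {D. for all f, delta(f) D in Diff_s}; maps are compared on V = Der.\<close>
fun is_diff ::
  "(('n, 'k::comm_ring_1) mpoly \<Rightarrow> 'm::ab_group_add \<Rightarrow> 'm) \<Rightarrow> nat \<Rightarrow>
   ((('n, 'k) mpoly \<Rightarrow> ('n, 'k) mpoly) \<Rightarrow> 'm \<Rightarrow> 'm) \<Rightarrow> bool" where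
  "is_diff act 0 D = (\<forall>f. \<forall>\<eta>\<in>Der. \<forall>v. delta act f D \<eta> v = 0)"
| "is_diff act (Suc s) D = (\<forall>f. is_diff act s (delta act f D))"

definition mi_abs :: "('n::finite \<Rightarrow>\<^sub>0 nat) \<Rightarrow> nat" where
  "mi_abs k = (\<Sum>i\<in>UNIV. Poly_Mapping.lookup k i)"

definition mi_le :: "('n \<Rightarrow>\<^sub>0 nat) \<Rightarrow> ('n \<Rightarrow>\<^sub>0 nat) \<Rightarrow> bool" where
  "mi_le k m \<longleftrightarrow> (\<forall>i. Poly_Mapping.lookup k i \<le> Poly_Mapping.lookup m i)"

definition mi_choose :: "('n::finite \<Rightarrow>\<^sub>0 nat) \<Rightarrow> ('n \<Rightarrow>\<^sub>0 nat) \<Rightarrow> nat" where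
  "mi_choose m k = (\<Prod>i\<in>UNIV. Poly_Mapping.lookup m i choose Poly_Mapping.lookup k i)"

definition Lplus_act ::
  "(('n::finite, 'k::comm_ring_1) mpoly \<Rightarrow> 'm::ab_group_add \<Rightarrow> 'm) \<Rightarrow>
   ((('n, 'k) mpoly \<Rightarrow> ('n, 'k) mpoly) \<Rightarrow> 'm \<Rightarrow> 'm) \<Rightarrow>
   ('n \<Rightarrow>\<^sub>0 nat) \<Rightarrow> 'n \<Rightarrow> 'm \<Rightarrow> 'm" where
  "Lplus_act act rho m p v =
     (\<Sum>k\<in>{k. mi_le k m}.
        act (cst ((-1) ^ mi_abs k * of_nat (mi_choose m k)) * xpow k)
            (rho (\<lambda>g. xpow (m - k) * pderiv_var p g) v))"

text \<open>m^s L_+ (spanned by X^m d/dX_p with |m| >= s+1) annihilates M\<close>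
definition annihilated_by_msLplus ::
  "(('n::finite, 'k::comm_ring_1) mpoly \<Rightarrow> 'm::ab_group_add \<Rightarrow> 'm) \<Rightarrow>
   ((('n, 'k) mpoly \<Rightarrow> ('n, 'k) mpoly) \<Rightarrow> 'm \<Rightarrow> 'm) \<Rightarrow> nat \<Rightarrow> bool" where
  "annihilated_by_msLplus act rho s \<longleftrightarrow>
     (\<forall>m p v. mi_abs m \<ge> s + 1 \<longrightarrow> Lplus_act act rho m p v = 0)"

end

theory Submission imports Defs "HOL-Library.FuncSet"
begin

abbreviation ee :: "'n \<Rightarrow> ('n \<Rightarrow>\<^sub>0 nat)" where "ee i \<equiv> Poly_Mapping.single i (Suc 0)"

lemma lookup_ee: "Poly_Mapping.lookup (ee i) j = (if i = j then 1 else 0)"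
  by (simp add: lookup_single when_def)

lemma lookup_ee' [simp]: "Poly_Mapping.lookup (Poly_Mapping.single i (Suc 0)) j = (if i = j then 1 else 0)"
  by (simp add: lookup_single when_def)

lemma lookup_map_pm: "Poly_Mapping.lookup (Poly_Mapping.map g f) k = (g (Poly_Mapping.lookup f k) when Poly_Mapping.lookup f k \<noteq> 0)"
  by (simp add: Poly_Mapping.map.rep_eq)

lemma lookup_cst_mult: "Poly_Mapping.lookup (cst c * f) a = c * Poly_Mapping.lookup f a"
  by (simp add: cst_def mult_map_scale_conv_mult[symmetric] lookup_map_pm when_def)

lemma cst_xpow: "cst c * xpow a = Poly_Mapping.single a c"
  by (simp add: cst_def xpow_def mult_single)

lemma xpow_mult: "xpow a * xpow b = (xpow (a + b) :: ('n,'k::comm_ring_1) mpoly)"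
  by (simp add: xpow_def mult_single)

lemma xpow_0: "xpow 0 = 1" by (simp add: xpow_def)
lemma cst_1: "cst 1 = 1" by (simp add: cst_def)
lemma cst_0: "cst 0 = 0" by (simp add: cst_def)
lemma cst_add: "cst (a + b) = cst a + cst b" by (simp add: cst_def single_add)
lemma cst_mult: "cst (a * b) = cst a * cst b" by (simp add: cst_def mult_single)
lemma cst_uminus: "cst (- a) = - cst a" by (simp add: cst_def single_uminus)

lemma mpoly_expand: "f = (\<Sum>a\<in>Poly_Mapping.keys f. cst (Poly_Mapping.lookup f a) * xpow a)"
proof (rule poly_mapping_eqI)
  fix a
  show "Poly_Mapping.lookup f a = Poly_Mapping.lookup (\<Sum>a\<in>Poly_Mapping.keys f. cst (Poly_Mapping.lookup f a) * xpow a) a"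
    by (simp add: cst_xpow lookup_sum lookup_single when_def in_keys_iff)
qed

lemma additive_sum:
  fixes L :: "'a::comm_monoid_add \<Rightarrow> 'b::ab_group_add"
  assumes "\<And>x y. L (x + y) = L x + L y"
  shows "L (sum h I) = (\<Sum>i\<in>I. L (h i))"
proof -
  have L0: "L 0 = 0" using assms[of 0 0] by simp
  show ?thesis
  proof (induction I rule: infinite_finite_induct)
    case (infinite A) then show ?case using L0 by simp
  next
    case empty then show ?case using L0 by simp
  next
    case (insert x F) then show ?case by (simp add: assms)
  qed
qed

lemma lin_zero:
  fixes L :: "('n, 'k::comm_ring_1) mpoly \<Rightarrow> 'b::ab_group_add"
  assumes "\<And>x y. L (x + y) = L x + L y"
    and "\<And>c a. L (cst c * xpow a) = 0"
  shows "L f = 0"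
proof -
  have "L f = L (\<Sum>a\<in>Poly_Mapping.keys f. cst (Poly_Mapping.lookup f a) * xpow a)"
    using mpoly_expand[of f] by simp
  also have "\<dots> = 0" by (simp add: additive_sum[of L, OF assms(1)] assms(2))
  finally show ?thesis .
qed

lemma pd_gen:
  assumes "finite A" "Poly_Mapping.keys f \<subseteq> A"
  shows "pderiv_var p f = (\<Sum>a\<in>A. Poly_Mapping.single (a - ee p) (of_nat (Poly_Mapping.lookup a p) * Poly_Mapping.lookup f a))"
  unfolding pderiv_var_def One_nat_def
  by (rule sum.mono_neutral_left) (use assms in \<open>auto simp: in_keys_iff\<close>)

lemma pd_add: "pderiv_var p (f + g) = pderiv_var p f + pderiv_var p (g :: ('n,'k::comm_ring_1) mpoly)"
proof -
  let ?A = "Poly_Mapping.keys f \<union> Poly_Mapping.keys g \<union> Poly_Mapping.keys (f + g)"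
  have fA: "finite ?A" by simp
  have 1: "pderiv_var p f = (\<Sum>a\<in>?A. Poly_Mapping.single (a - ee p) (of_nat (Poly_Mapping.lookup a p) * Poly_Mapping.lookup f a))"
    by (rule pd_gen[OF fA]) auto
  have 2: "pderiv_var p g = (\<Sum>a\<in>?A. Poly_Mapping.single (a - ee p) (of_nat (Poly_Mapping.lookup a p) * Poly_Mapping.lookup g a))"
    by (rule pd_gen[OF fA]) auto
  have 3: "pderiv_var p (f+g) = (\<Sum>a\<in>?A. Poly_Mapping.single (a - ee p) (of_nat (Poly_Mapping.lookup a p) * Poly_Mapping.lookup (f+g) a))"
    by (rule pd_gen[OF fA]) auto
  show ?thesis
    unfolding 1 2 3 by (simp add: lookup_add distrib_left single_add sum.distrib)
qed

lemma keys_cst_mult: "Poly_Mapping.keys (cst c * f) \<subseteq> Poly_Mapping.keys f"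
  by (auto simp: in_keys_iff lookup_cst_mult)

lemma pd_cst: "pderiv_var p (cst c * f) = cst c * pderiv_var p (f :: ('n,'k::comm_ring_1) mpoly)"
proof -
  have fA: "finite (Poly_Mapping.keys f)" by simp
  have 1: "pderiv_var p (cst c * f) = (\<Sum>a\<in>Poly_Mapping.keys f. Poly_Mapping.single (a - ee p) (of_nat (Poly_Mapping.lookup a p) * Poly_Mapping.lookup (cst c * f) a))"
    by (rule pd_gen[OF fA]) (rule keys_cst_mult)
  show ?thesis
    unfolding 1 unfolding lookup_cst_mult pderiv_var_def sum_distrib_left One_nat_def
    by (rule sum.cong[OF refl]) (simp add: cst_def mult_single mult.left_commute)
qed

lemma pd_xpow: "pderiv_var p (xpow a :: ('n,'k::comm_ring_1) mpoly) = cst (of_nat (Poly_Mapping.lookup a p)) * xpow (a - ee p)"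
proof -
  have fA: "finite {a}" "Poly_Mapping.keys (xpow a :: ('n,'k) mpoly) \<subseteq> {a}" by (auto simp: xpow_def in_keys_iff lookup_single when_def)
  show ?thesis by (simp add: pd_gen[OF fA, of p] cst_xpow) (simp add: xpow_def)
qed

lemma pd_mono_prod:
  "pderiv_var p (xpow a * xpow b :: ('n,'k::comm_ring_1) mpoly) = xpow a * pderiv_var p (xpow b) + xpow b * pderiv_var p (xpow a)"
proof -
  have 1: "xpow a * (cst (of_nat (Poly_Mapping.lookup b p)) * xpow (b - ee p)) =
      cst (of_nat (Poly_Mapping.lookup b p)) * (xpow (a + b - ee p) :: ('n,'k) mpoly)"
  proof (cases "Poly_Mapping.lookup b p = 0")
    case True then show ?thesis by (simp add: cst_0)
  next
    case False
    have "a + (b - ee p) = a + b - ee p"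
      by (rule poly_mapping_eqI) (use False in \<open>auto simp add: lookup_add lookup_minus lookup_single when_def\<close>)
    then show ?thesis by (metis xpow_mult mult.left_commute)
  qed
  have 2: "xpow b * (cst (of_nat (Poly_Mapping.lookup a p)) * xpow (a - ee p)) =
      cst (of_nat (Poly_Mapping.lookup a p)) * (xpow (a + b - ee p) :: ('n,'k) mpoly)"
  proof (cases "Poly_Mapping.lookup a p = 0")
    case True then show ?thesis by (simp add: cst_0)
  next
    case False
    have "b + (a - ee p) = a + b - ee p"
      by (rule poly_mapping_eqI) (use False in \<open>auto simp add: lookup_add lookup_minus lookup_single when_def\<close>)
    then show ?thesis by (metis xpow_mult mult.left_commute)
  qed
  show ?thesis
    by (simp only: xpow_mult pd_xpow 1 2) (simp add: lookup_add cst_add algebra_simps)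
qed

lemma pd_prod: "pderiv_var p (f * g :: ('n,'k::comm_ring_1) mpoly) = f * pderiv_var p g + g * pderiv_var p f"
proof -
  have step: "pderiv_var p (xpow a * g :: ('n,'k) mpoly) = xpow a * pderiv_var p g + g * pderiv_var p (xpow a)" for a
  proof -
    let ?L = "\<lambda>g. pderiv_var p (xpow a * g :: ('n,'k) mpoly) - (xpow a * pderiv_var p g + g * pderiv_var p (xpow a))"
    have "?L g = 0"
    proof (rule lin_zero[where L="?L"])
      show "?L (x + y) = ?L x + ?L y" for x y by (simp add: distrib_left distrib_right pd_add)
      show "?L (cst c * xpow b) = 0" for c b
        by (simp add: mult.left_commute[of "xpow a"] pd_cst pd_mono_prod algebra_simps)
    qed
    then show ?thesis by simp
  qed
  let ?L = "\<lambda>f. pderiv_var p (f * g :: ('n,'k) mpoly) - (f * pderiv_var p g + g * pderiv_var p f)"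
  have "?L f = 0"
  proof (rule lin_zero[where L="?L"])
    show "?L (x + y) = ?L x + ?L y" for x y by (simp add: distrib_left distrib_right pd_add)
    show "?L (cst c * xpow b) = 0" for c b
    proof -
      have "cst c * xpow b * g = cst c * (xpow b * g)" by (simp add: ac_simps)
      then show ?thesis by (simp only: pd_cst step) (simp add: algebra_simps)
    qed
  qed
  then show ?thesis by simp
qed


lemma pd_der: "pderiv_var p \<in> (Der :: (('n,'k::comm_ring_1) mpoly \<Rightarrow> _) set)"
  unfolding Der_def is_derivation_def mem_Collect_eq by (intro conjI allI pd_add pd_cst pd_prod)

lemma der_mult: "\<eta> \<in> Der \<Longrightarrow> (\<lambda>g. h * \<eta> g) \<in> (Der :: (('n,'k::comm_ring_1) mpoly \<Rightarrow> _) set)"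
  unfolding Der_def is_derivation_def mem_Collect_eq
proof (elim conjE, intro conjI allI)
  fix f g c
  assume a: "\<forall>f g. \<eta> (f + g) = \<eta> f + \<eta> g" "\<forall>c f. \<eta> (cst c * f) = cst c * \<eta> f"
    "\<forall>f g. \<eta> (f * g) = f * \<eta> g + g * \<eta> f"
  show "h * \<eta> (f + g) = h * \<eta> f + h * \<eta> g" using a(1) by (simp add: distrib_left)
  show "h * \<eta> (cst c * f) = cst c * (h * \<eta> f)" using a(2) by (simp add: mult.left_commute)
  show "h * \<eta> (f * g) = f * (h * \<eta> g) + g * (h * \<eta> f)" using a(3) by (simp add: algebra_simps)
qed

lemma der_add: "\<eta> \<in> Der \<Longrightarrow> \<zeta> \<in> Der \<Longrightarrow> (\<lambda>g. \<eta> g + \<zeta> g) \<in> (Der :: (('n,'k::comm_ring_1) mpoly \<Rightarrow> _) set)"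
  unfolding Der_def is_derivation_def mem_Collect_eq
proof (elim conjE, intro conjI allI)
  fix f g c
  assume a: "\<forall>f g. \<eta> (f + g) = \<eta> f + \<eta> g" "\<forall>c f. \<eta> (cst c * f) = cst c * \<eta> f"
    "\<forall>f g. \<eta> (f * g) = f * \<eta> g + g * \<eta> f"
  assume b: "\<forall>f g. \<zeta> (f + g) = \<zeta> f + \<zeta> g" "\<forall>c f. \<zeta> (cst c * f) = cst c * \<zeta> f"
    "\<forall>f g. \<zeta> (f * g) = f * \<zeta> g + g * \<zeta> f"
  show "\<eta> (f + g) + \<zeta> (f + g) = \<eta> f + \<zeta> f + (\<eta> g + \<zeta> g)" using a(1) b(1) by (simp add: algebra_simps)
  show "\<eta> (cst c * f) + \<zeta> (cst c * f) = cst c * (\<eta> f + \<zeta> f)" using a(2) b(2) by (simp add: distrib_left)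
  show "\<eta> (f * g) + \<zeta> (f * g) = f * (\<eta> g + \<zeta> g) + g * (\<eta> f + \<zeta> f)" using a(3) b(3) by (simp add: algebra_simps)
qed

lemma der_zero: "(\<lambda>g. 0) \<in> (Der :: (('n,'k::comm_ring_1) mpoly \<Rightarrow> _) set)"
  by (simp add: Der_def is_derivation_def)

lemma xpd_der: "(\<lambda>g. xpow b * pderiv_var p g) \<in> (Der :: (('n,'k::comm_ring_1) mpoly \<Rightarrow> _) set)"
  by (rule der_mult[OF pd_der])

lemma mi_abs_add: "mi_abs (a + b) = mi_abs a + mi_abs b"
  by (simp add: mi_abs_def lookup_add sum.distrib)

lemma mi_abs_ee: "mi_abs (ee i :: ('n::finite \<Rightarrow>\<^sub>0 nat)) = 1"
  unfolding mi_abs_def by (subst sum.remove[of UNIV i]) auto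

lemma mi_abs_0: "mi_abs (a :: ('n::finite \<Rightarrow>\<^sub>0 nat)) = 0 \<longleftrightarrow> a = 0"
proof
  assume "mi_abs a = 0"
  then have "\<forall>i. Poly_Mapping.lookup a i = 0" by (simp add: mi_abs_def)
  then show "a = 0" by (intro poly_mapping_eqI) simp
qed (simp add: mi_abs_def)

lemma split_ee:
  assumes "(a :: ('n::finite \<Rightarrow>\<^sub>0 nat)) \<noteq> 0"
  obtains i where "a = (a - ee i) + ee i" "mi_abs (a - ee i) < mi_abs a" "0 < Poly_Mapping.lookup a i"
proof -
  obtain i where i: "Poly_Mapping.lookup a i \<noteq> 0"
    using assms by (metis poly_mapping_eqI lookup_zero)
  have eq: "a = (a - ee i) + ee i"
    by (rule poly_mapping_eqI) (use i in \<open>auto simp add: lookup_add lookup_minus\<close>)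
  have "mi_abs a = mi_abs (a - ee i) + 1" by (subst eq) (simp add: mi_abs_add mi_abs_ee)
  then show ?thesis using that eq i by simp
qed

lemma der_xpow_zero:
  fixes D :: "('n::finite,'k::comm_ring_1) mpoly \<Rightarrow> ('n,'k) mpoly"
  assumes prod: "\<And>f g. D (f * g) = f * D g + g * D f" and gen: "\<And>i. D (xpow (ee i)) = 0"
  shows "D (xpow a) = 0"
proof (induction "mi_abs a" arbitrary: a rule: less_induct)
  case less
  show ?case
  proof (cases "a = 0")
    case True
    have "D 1 = D 1 + D 1" using prod[of 1 1] by simp
    then show ?thesis using True by (simp add: xpow_0)
  next
    case False
    then obtain i where eq: "a = (a - ee i) + ee i" and lt: "mi_abs (a - ee i) < mi_abs a"
      by (rule split_ee)
    have "D (xpow a) = D (xpow (a - ee i) * xpow (ee i))" by (subst eq) (simp add: xpow_mult)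
    also have "\<dots> = 0" by (simp only: prod gen less(1)[OF lt]) simp
    finally show ?thesis .
  qed
qed

lemma pd_var: "pderiv_var p (xpow (ee i) :: ('n,'k::comm_ring_1) mpoly) = (if p = i then 1 else 0)"
  by (auto simp: pd_xpow lookup_ee xpow_0 cst_1 cst_0)

lemma der_decomp:
  fixes \<eta> :: "('n::finite,'k::comm_ring_1) mpoly \<Rightarrow> ('n,'k) mpoly"
  assumes "\<eta> \<in> Der"
  shows "\<eta> g = (\<Sum>p\<in>UNIV. \<eta> (xpow (ee p)) * pderiv_var p g)"
proof -
  have D: "\<And>f g. \<eta> (f + g) = \<eta> f + \<eta> g" "\<And>c f. \<eta> (cst c * f) = cst c * \<eta> f"
     "\<And>f g. \<eta> (f * g) = f * \<eta> g + g * \<eta> f"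
    using assms by (auto simp: Der_def is_derivation_def)
  define L where "L g = \<eta> g - (\<Sum>p\<in>UNIV. \<eta> (xpow (ee p)) * pderiv_var p g)" for g
  have Ladd: "L (f + g) = L f + L g" for f g
    by (simp add: L_def D pd_add distrib_left sum.distrib)
  have Lcst: "L (cst c * f) = cst c * L f" for c f
    by (simp only: L_def D(2) pd_cst) (simp add: sum_distrib_left right_diff_distrib mult.left_commute)
  have Lprod: "L (f * g) = f * L g + g * L f" for f g
    by (simp add: L_def D pd_prod sum_distrib_left distrib_left right_diff_distrib sum.distrib
        mult.left_commute)
  have Lgen: "L (xpow (ee i)) = 0" for i
    by (simp add: L_def pd_var if_distrib cong: if_cong)
  have "L g = 0"
  proof (rule lin_zero[where L=L])
    show "L (x + y) = L x + L y" for x y by (rule Ladd)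
    show "L (cst c * xpow a) = 0" for c a
      by (simp add: Lcst der_xpow_zero[of L, OF Lprod Lgen])
  qed
  then show ?thesis by (simp add: L_def)
qed



lemma finite_mi_le: "finite {k. mi_le k (m :: ('n::finite \<Rightarrow>\<^sub>0 nat))}"
proof -
  have "Poly_Mapping.lookup ` {k. mi_le k m} \<subseteq> PiE UNIV (\<lambda>i. {..Poly_Mapping.lookup m i})"
    by (auto simp: mi_le_def PiE_def extensional_def)
  moreover have "finite (PiE UNIV (\<lambda>i. {..Poly_Mapping.lookup m i}))"
    by (rule finite_PiE) auto
  ultimately have "finite (Poly_Mapping.lookup ` {k. mi_le k m})" by (rule finite_subset)
  moreover have "inj_on Poly_Mapping.lookup {k. mi_le k m}"
    by (rule inj_onI) (simp add: poly_mapping_eqI)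
  ultimately show ?thesis by (rule finite_imageD)
qed

lemma mi_choose_0: "\<not> mi_le k m \<Longrightarrow> mi_choose m (k :: ('n::finite \<Rightarrow>\<^sub>0 nat)) = 0"
  unfolding mi_le_def mi_choose_def
  by (rule prod_zero) (auto simp: binomial_eq_0 not_le)

lemma mi_choose_pascal:
  "mi_choose (m + ee i) (k :: ('n::finite \<Rightarrow>\<^sub>0 nat)) =
     mi_choose m k + (if 0 < Poly_Mapping.lookup k i then mi_choose m (k - ee i) else 0)"
proof -
  let ?P = "\<Prod>j\<in>UNIV - {i}. Poly_Mapping.lookup m j choose Poly_Mapping.lookup k j"
  have 1: "mi_choose (m + ee i) k = (Poly_Mapping.lookup m i + 1 choose Poly_Mapping.lookup k i) * ?P"
    unfolding mi_choose_def
    by (subst prod.remove[of UNIV i]) (auto simp: lookup_add intro!: prod.cong)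
  have 2: "mi_choose m k = (Poly_Mapping.lookup m i choose Poly_Mapping.lookup k i) * ?P"
    unfolding mi_choose_def by (subst prod.remove[of UNIV i]) auto
  have 3: "mi_choose m (k - ee i) = (Poly_Mapping.lookup m i choose (Poly_Mapping.lookup k i - 1)) * ?P"
    unfolding mi_choose_def
    by (subst prod.remove[of UNIV i]) (auto simp: lookup_minus intro!: prod.cong)
  show ?thesis
  proof (cases "Poly_Mapping.lookup k i")
    case 0 then show ?thesis by (simp add: 1 2)
  next
    case (Suc r) then show ?thesis by (simp add: 1 2 3 distrib_right)
  qed
qed

lemma mi_abs_minus: "mi_le k m \<Longrightarrow> mi_abs (m - k) = mi_abs m - mi_abs (k :: ('n::finite \<Rightarrow>\<^sub>0 nat))"
proof -
  assume "mi_le k m"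
  then have "m = (m - k) + k"
    by (intro poly_mapping_eqI) (simp add: mi_le_def lookup_add lookup_minus)
  then have "mi_abs m = mi_abs (m - k) + mi_abs k" by (metis mi_abs_add)
  then show ?thesis by simp
qed

locale amod =
  fixes act :: "('n::finite,'k::comm_ring_1) mpoly \<Rightarrow> 'm::ab_group_add \<Rightarrow> 'm"
  assumes am: "A_module act"
begin

lemma act_one [simp]: "act 1 v = v" using am by (simp add: A_module_def)
lemma act_mult: "act (f * g) v = act f (act g v)" using am by (simp add: A_module_def)
lemma act_addf: "act (f + g) v = act f v + act g v" using am by (simp add: A_module_def)
lemma act_addv: "act f (v + w) = act f v + act f w" using am by (simp add: A_module_def)
lemma act_zerov [simp]: "act f 0 = 0" using act_addv[of f 0 0] by simp
lemma act_zerof [simp]: "act 0 v = 0" using act_addf[of 0 0 v] by simp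
lemma act_diffv: "act f (v - w) = act f v - act f w"
  using act_addv[of f "v - w" w] by (simp add: eq_diff_eq)
lemma act_minusv: "act f (- v) = - act f v"
  using act_diffv[of f 0 v] by simp
lemma act_comm: "act f (act g v) = act g (act f v)"
  by (metis act_mult mult.commute)
lemma act_sumv: "act f (sum h I) = (\<Sum>i\<in>I. act f (h i))"
  by (rule additive_sum[of "act f"]) (rule act_addv)
lemma act_sumf: "act (sum h I) v = (\<Sum>i\<in>I. act (h i) v)"
  by (rule additive_sum[of "\<lambda>f. act f v"]) (rule act_addf)

definition Good :: "((('n, 'k) mpoly \<Rightarrow> ('n, 'k) mpoly) \<Rightarrow> 'm \<Rightarrow> 'm) \<Rightarrow> bool" where
  "Good E \<longleftrightarrow> (\<forall>\<eta>\<in>Der. \<forall>\<zeta>\<in>Der. \<forall>v. E (\<lambda>f. \<eta> f + \<zeta> f) v = E \<eta> v + E \<zeta> v) \<and>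
     (\<forall>\<eta>\<in>Der. \<forall>c v. E (\<lambda>f. cst c * \<eta> f) v = act (cst c) (E \<eta> v))"

lemma Good_add: "Good E \<Longrightarrow> \<eta> \<in> Der \<Longrightarrow> \<zeta> \<in> Der \<Longrightarrow> E (\<lambda>f. \<eta> f + \<zeta> f) v = E \<eta> v + E \<zeta> v"
  by (simp add: Good_def)
lemma Good_cst: "Good E \<Longrightarrow> \<eta> \<in> Der \<Longrightarrow> E (\<lambda>f. cst c * \<eta> f) v = act (cst c) (E \<eta> v)"
  by (simp add: Good_def)

lemma Good_zero: "Good E \<Longrightarrow> E (\<lambda>g. 0) v = 0"
  using Good_add[of E "\<lambda>g. 0" "\<lambda>g. 0" v] der_zero by simp

lemma E_sum:
  assumes G: "Good E" and "finite I" and "\<forall>i\<in>I. \<zeta> i \<in> Der \<and> (\<forall>v. E (\<zeta> i) v = 0)"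
  shows "(\<lambda>g. \<Sum>i\<in>I. \<zeta> i g) \<in> Der \<and> (\<forall>v. E (\<lambda>g. \<Sum>i\<in>I. \<zeta> i g) v = 0)"
  using assms(2,3)
proof (induction I rule: finite_induct)
  case empty then show ?case using Good_zero[OF G] der_zero by simp
next
  case (insert x F)
  then have d: "\<zeta> x \<in> Der" "(\<lambda>g. \<Sum>i\<in>F. \<zeta> i g) \<in> Der" and z: "\<forall>v. E (\<zeta> x) v = 0"
     "\<forall>v. E (\<lambda>g. \<Sum>i\<in>F. \<zeta> i g) v = 0" by auto
  have eq: "(\<lambda>g. \<Sum>i\<in>insert x F. \<zeta> i g) = (\<lambda>g. \<zeta> x g + (\<lambda>g. \<Sum>i\<in>F. \<zeta> i g) g)"
    using insert(1,2) by simp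
  show ?case unfolding eq
    using der_add[OF d] Good_add[OF G d] z by simp
qed

lemma E_zero:
  assumes G: "Good E" and z: "\<And>b p v. E (\<lambda>g. xpow b * pderiv_var p g) v = 0" and "\<eta> \<in> Der"
  shows "E \<eta> v = 0"
proof -
  define c where "c p b = Poly_Mapping.lookup (\<eta> (xpow (ee p))) b" for p b
  define K where "K p = Poly_Mapping.keys (\<eta> (xpow (ee p)))" for p
  have eq: "\<eta> = (\<lambda>g. \<Sum>p\<in>UNIV. (\<lambda>g. \<Sum>b\<in>K p. cst (c p b) * (xpow b * pderiv_var p g)) g)"
  proof
    fix g
    have "\<eta> g = (\<Sum>p\<in>UNIV. \<eta> (xpow (ee p)) * pderiv_var p g)" by (rule der_decomp[OF assms(3)])
    also have "\<dots> = (\<Sum>p\<in>UNIV. (\<Sum>b\<in>K p. cst (c p b) * xpow b) * pderiv_var p g)"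
      unfolding c_def K_def by (subst mpoly_expand) simp
    finally show "\<eta> g = (\<lambda>g. \<Sum>p\<in>UNIV. (\<lambda>g. \<Sum>b\<in>K p. cst (c p b) * (xpow b * pderiv_var p g)) g) g"
      by (simp add: sum_distrib_right mult.assoc)
  qed
  have inner: "(\<lambda>g. \<Sum>b\<in>K p. cst (c p b) * (xpow b * pderiv_var p g)) \<in> Der \<and>
      (\<forall>v. E (\<lambda>g. \<Sum>b\<in>K p. cst (c p b) * (xpow b * pderiv_var p g)) v = 0)" for p
  proof (rule E_sum[OF G])
    show "finite (K p)" by (simp add: K_def)
    show "\<forall>b\<in>K p. (\<lambda>g. cst (c p b) * (xpow b * pderiv_var p g)) \<in> Der \<and>
        (\<forall>v. E (\<lambda>g. cst (c p b) * (xpow b * pderiv_var p g)) v = 0)"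
    proof
      fix b assume "b \<in> K p"
      have "(\<lambda>g. cst (c p b) * (xpow b * pderiv_var p g)) \<in> Der"
        by (rule der_mult[OF xpd_der])
      moreover have "E (\<lambda>g. cst (c p b) * (xpow b * pderiv_var p g)) v = 0" for v
        using Good_cst[OF G xpd_der, of "c p b" b p v] z by simp
      ultimately show "(\<lambda>g. cst (c p b) * (xpow b * pderiv_var p g)) \<in> Der \<and>
        (\<forall>v. E (\<lambda>g. cst (c p b) * (xpow b * pderiv_var p g)) v = 0)" by blast
    qed
  qed
  have "E (\<lambda>g. \<Sum>p\<in>UNIV. (\<lambda>g. \<Sum>b\<in>K p. cst (c p b) * (xpow b * pderiv_var p g)) g) v = 0"
    using E_sum[OF G, of UNIV "\<lambda>p. (\<lambda>g. \<Sum>b\<in>K p. cst (c p b) * (xpow b * pderiv_var p g))"] inner by simp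
  then show ?thesis using eq by simp
qed


lemma delta_app: "delta act f E \<eta> v = E (\<lambda>g. f * \<eta> g) v - act f (E \<eta> v)"
  by (simp add: delta_def)

lemma Good_delta: assumes G: "Good E" shows "Good (delta act f E)"
  unfolding Good_def
proof (intro conjI ballI allI)
  fix \<eta> \<zeta> :: "('n,'k) mpoly \<Rightarrow> ('n,'k) mpoly" and v assume d: "\<eta> \<in> Der" "\<zeta> \<in> Der"
  have eq: "(\<lambda>g. f * (\<eta> g + \<zeta> g)) = (\<lambda>g. (\<lambda>g. f * \<eta> g) g + (\<lambda>g. f * \<zeta> g) g)"
    by (simp add: distrib_left)
  show "delta act f E (\<lambda>g. \<eta> g + \<zeta> g) v = delta act f E \<eta> v + delta act f E \<zeta> v"
    unfolding delta_app eq Good_add[OF G der_mult[OF d(1)] der_mult[OF d(2)]] Good_add[OF G d] act_addv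
    by simp
next
  fix \<eta> :: "('n,'k) mpoly \<Rightarrow> ('n,'k) mpoly" and c v assume d: "\<eta> \<in> Der"
  have eq: "(\<lambda>g. f * (cst c * \<eta> g)) = (\<lambda>g. cst c * (\<lambda>g. f * \<eta> g) g)"
    by (simp add: mult.left_commute)
  show "delta act f E (\<lambda>g. cst c * \<eta> g) v = act (cst c) (delta act f E \<eta> v)"
    unfolding delta_app eq Good_cst[OF G der_mult[OF d]] Good_cst[OF G d] act_diffv
    by (simp add: act_comm)
qed

lemma delta_one: "delta act 1 E \<eta> v = 0"
  by (simp add: delta_app)

lemma delta_addf: "Good E \<Longrightarrow> \<eta> \<in> Der \<Longrightarrow>
   delta act (f + g) E \<eta> v = delta act f E \<eta> v + delta act g E \<eta> v"
proof -
  assume G: "Good E" and d: "\<eta> \<in> Der"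
  have eq: "(\<lambda>h. (f + g) * \<eta> h) = (\<lambda>h. (\<lambda>h. f * \<eta> h) h + (\<lambda>h. g * \<eta> h) h)"
    by (simp add: distrib_right)
  show ?thesis
    unfolding delta_app eq Good_add[OF G der_mult[OF d] der_mult[OF d]] act_addf
    by simp
qed

lemma delta_cstf: "Good E \<Longrightarrow> \<eta> \<in> Der \<Longrightarrow>
   delta act (cst c * f) E \<eta> v = act (cst c) (delta act f E \<eta> v)"
proof -
  assume G: "Good E" and d: "\<eta> \<in> Der"
  have eq: "(\<lambda>h. (cst c * f) * \<eta> h) = (\<lambda>h. cst c * (\<lambda>h. f * \<eta> h) h)"
    by (simp add: mult.assoc)
  show ?thesis
    unfolding delta_app eq Good_cst[OF G der_mult[OF d]] act_diffv act_mult
    by simp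
qed

lemma delta_prod:
  "delta act (f * g) E \<eta> v = delta act f (delta act g E) \<eta> v + act g (delta act f E \<eta> v)
      + act f (delta act g E \<eta> v)"
proof -
  have eq: "(\<lambda>h. g * (f * \<eta> h)) = (\<lambda>h. (f * g) * \<eta> h)" by (simp add: ac_simps)
  show ?thesis
    unfolding delta_app eq act_diffv act_mult
    by (simp add: act_comm[of g f] algebra_simps)
qed

lemma Phi_cong: assumes "\<And>\<eta> v. \<eta> \<in> Der \<Longrightarrow> E \<eta> v = E' \<eta> v"
  shows "Lplus_act act E m p v = Lplus_act act E' m p v"
  unfolding Lplus_act_def using assms[OF xpd_der] by simp

lemma Phi_add: "Lplus_act act (\<lambda>\<eta> v. E1 \<eta> v + E2 \<eta> v) m p v = Lplus_act act E1 m p v + Lplus_act act E2 m p v"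
  unfolding Lplus_act_def by (simp add: act_addv sum.distrib)

lemma Phi_act: "Lplus_act act (\<lambda>\<eta> v. act h (E \<eta> v)) m p v = act h (Lplus_act act E m p v)"
  unfolding Lplus_act_def by (simp add: act_sumv act_comm[of h])

lemma Phi_sum: "Lplus_act act (\<lambda>\<eta> v. \<Sum>a\<in>A. G a \<eta> v) m p v = (\<Sum>a\<in>A. Lplus_act act (G a) m p v)"
  unfolding Lplus_act_def by (simp add: act_sumv sum.swap[of _ A])

lemma Phi_zero: "Lplus_act act (\<lambda>\<eta> v. 0) m p v = 0"
  unfolding Lplus_act_def by simp


lemma act_minusf: "act (- f) w = - act f w"
  using act_addf[of "- f" f w] by (simp add: eq_neg_iff_add_eq_0)

lemma Phi_shift:
  "Lplus_act act (delta act (xpow (ee i)) E) m p v = Lplus_act act E (m + ee i) p v"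
proof -
  define h where "h b = E (\<lambda>g. xpow b * pderiv_var p g) v" for b
  define c where "c (m::'n \<Rightarrow>\<^sub>0 nat) k = ((-1::'k) ^ mi_abs k * of_nat (mi_choose m k))" for m k
  define S where "S m = {k. mi_le k m}" for m :: "'n \<Rightarrow>\<^sub>0 nat"
  have fS: "finite (S m)" for m by (simp add: S_def finite_mi_le)
  have eqf: "(\<lambda>g. xpow (ee i) * (xpow b * pderiv_var p g)) = (\<lambda>g. xpow (b + ee i) * pderiv_var p g)" for b
    by (simp add: mult.assoc[symmetric] xpow_mult add.commute)
  have L: "Lplus_act act (delta act (xpow (ee i)) E) m p v =
     (\<Sum>k\<in>S m. act (cst (c m k) * xpow k) (h (m - k + ee i)) - act (cst (c m k) * xpow (k + ee i)) (h (m - k)))"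
    unfolding Lplus_act_def S_def
  proof (rule sum.cong[OF refl])
    fix k
    show "act (cst ((- 1) ^ mi_abs k * of_nat (mi_choose m k)) * xpow k)
          (delta act (xpow (ee i)) E (\<lambda>g. xpow (m - k) * pderiv_var p g) v) =
        act (cst (c m k) * xpow k) (h (m - k + ee i)) - act (cst (c m k) * xpow (k + ee i)) (h (m - k))"
      unfolding delta_app eqf act_diffv c_def h_def
      by (simp add: act_mult xpow_mult[symmetric])
  qed
  have R: "Lplus_act act E (m + ee i) p v =
     (\<Sum>k\<in>S (m + ee i). act (cst (c (m + ee i) k) * xpow k) (h (m + ee i - k)))"
    unfolding Lplus_act_def S_def c_def h_def by simp
  define B where "B k = (if 0 < Poly_Mapping.lookup k i
      then act (cst ((-1::'k) ^ mi_abs k * of_nat (mi_choose m (k - ee i))) * xpow k) (h (m + ee i - k)) else 0)" for k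
  have split: "act (cst (c (m + ee i) k) * xpow k) (h (m + ee i - k)) =
      act (cst (c m k) * xpow k) (h (m + ee i - k)) + B k" for k
    unfolding B_def c_def mi_choose_pascal
    by (auto simp: cst_add cst_0 distrib_left distrib_right act_addf)
  have A: "(\<Sum>k\<in>S (m + ee i). act (cst (c m k) * xpow k) (h (m + ee i - k))) =
      (\<Sum>k\<in>S m. act (cst (c m k) * xpow k) (h (m - k + ee i)))"
  proof -
    have sub: "S m \<subseteq> S (m + ee i)" by (auto simp: S_def mi_le_def lookup_add intro: le_SucI)
    have "(\<Sum>k\<in>S (m + ee i). act (cst (c m k) * xpow k) (h (m + ee i - k))) =
        (\<Sum>k\<in>S m. act (cst (c m k) * xpow k) (h (m + ee i - k)))"
      by (rule sum.mono_neutral_right[OF fS sub]) (auto simp: S_def c_def mi_choose_0 cst_0)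
    also have "\<dots> = (\<Sum>k\<in>S m. act (cst (c m k) * xpow k) (h (m - k + ee i)))"
    proof (rule sum.cong[OF refl])
      fix k assume "k \<in> S m"
      then have "m + ee i - k = m - k + ee i"
        by (intro poly_mapping_eqI) (auto simp: S_def mi_le_def lookup_add lookup_minus)
      then show "act (cst (c m k) * xpow k) (h (m + ee i - k)) = act (cst (c m k) * xpow k) (h (m - k + ee i))"
        by simp
    qed
    finally show ?thesis .
  qed
  have Bsum: "(\<Sum>k\<in>S (m + ee i). B k) = (\<Sum>k\<in>S m. - act (cst (c m k) * xpow (k + ee i)) (h (m - k)))"
  proof -
    have img: "{k \<in> S (m + ee i). 0 < Poly_Mapping.lookup k i} = (\<lambda>k. k + ee i) ` S m"
    proof (intro equalityI subsetI)
      fix k assume k: "k \<in> {k \<in> S (m + ee i). 0 < Poly_Mapping.lookup k i}"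
      have "k = (k - ee i) + ee i"
        by (rule poly_mapping_eqI) (use k in \<open>auto simp: lookup_add lookup_minus\<close>)
      moreover have "k - ee i \<in> S m"
      proof -
        have kk: "Poly_Mapping.lookup k j \<le> Poly_Mapping.lookup m j + (if i = j then 1 else 0)" for j
          using k by (simp add: S_def mi_le_def lookup_add)
        have "Poly_Mapping.lookup k j - (if i = j then 1 else 0) \<le> Poly_Mapping.lookup m j" for j
          using kk[of j] by (cases "i = j") auto
        then show ?thesis by (simp add: S_def mi_le_def lookup_minus)
      qed
      ultimately show "k \<in> (\<lambda>k. k + ee i) ` S m" by blast
    next
      fix k assume "k \<in> (\<lambda>k. k + ee i) ` S m"
      then show "k \<in> {k \<in> S (m + ee i). 0 < Poly_Mapping.lookup k i}"
        by (auto simp: S_def mi_le_def lookup_add)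
    qed
    have inj: "inj_on (\<lambda>k. k + ee i) (S m)"
      by (rule inj_onI) (metis add_right_cancel)
    have "(\<Sum>k\<in>S (m + ee i). B k) = (\<Sum>k\<in>{k \<in> S (m + ee i). 0 < Poly_Mapping.lookup k i}. B k)"
      by (rule sum.mono_neutral_right) (auto simp: fS B_def)
    also have "\<dots> = (\<Sum>k\<in>S m. B (k + ee i))"
      unfolding img by (rule sum.reindex[OF inj, unfolded comp_def])
    also have "\<dots> = (\<Sum>k\<in>S m. - act (cst (c m k) * xpow (k + ee i)) (h (m - k)))"
    proof (rule sum.cong[OF refl])
      fix k
      have 1: "k + ee i - ee i = k" by (rule poly_mapping_eqI) (simp add: lookup_add lookup_minus)
      have 2: "m + ee i - (k + ee i) = m - k" by (rule poly_mapping_eqI) (simp add: lookup_add lookup_minus)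
      show "B (k + ee i) = - act (cst (c m k) * xpow (k + ee i)) (h (m - k))"
        unfolding B_def c_def 1 2
        by (simp add: lookup_add mi_abs_add mi_abs_ee cst_uminus act_minusf)
    qed
    finally show ?thesis .
  qed
  show ?thesis
    unfolding L R split sum.distrib A Bsum
    by (simp add: sum_subtractf sum_negf)
qed


definition annz :: "((('n, 'k) mpoly \<Rightarrow> ('n, 'k) mpoly) \<Rightarrow> 'm \<Rightarrow> 'm) \<Rightarrow> nat \<Rightarrow> bool" where
  "annz E t \<longleftrightarrow> (\<forall>m p v. t \<le> mi_abs m \<longrightarrow> Lplus_act act E m p v = 0)"

lemma step_back:
  assumes "\<forall>f. annz (delta act f E) t"
  shows "annz E (Suc t)"
  unfolding annz_def
proof (intro allI impI)
  fix m :: "'n \<Rightarrow>\<^sub>0 nat" and p v assume le: "Suc t \<le> mi_abs m"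
  then have "m \<noteq> 0" by (auto simp: mi_abs_def)
  then obtain i where eq: "m = (m - ee i) + ee i" and lt: "mi_abs (m - ee i) < mi_abs m"
    by (rule split_ee)
  have "mi_abs m = mi_abs (m - ee i) + 1" by (subst eq) (simp add: mi_abs_add mi_abs_ee)
  then have t: "t \<le> mi_abs (m - ee i)" using le by simp
  have "Lplus_act act E m p v = Lplus_act act E ((m - ee i) + ee i) p v" using eq by simp
  also have "\<dots> = Lplus_act act (delta act (xpow (ee i)) E) (m - ee i) p v" by (rule Phi_shift[symmetric])
  also have "\<dots> = 0" using assms t by (simp add: annz_def)
  finally show "Lplus_act act E m p v = 0" .
qed

lemma step_fwd_mono:
  assumes G: "Good E" and A: "annz E (Suc t)"
  shows "annz (delta act (xpow a) E) t"
proof (induction "mi_abs a" arbitrary: a rule: less_induct)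
  case less
  show ?case
  proof (cases "a = 0")
    case True
    have "delta act (xpow a) E = (\<lambda>\<eta> v. 0)" using True by (simp add: fun_eq_iff xpow_0 delta_one)
    then show ?thesis by (simp add: annz_def Phi_zero)
  next
    case False
    then obtain i where eq: "a = (a - ee i) + ee i" and lt: "mi_abs (a - ee i) < mi_abs a"
      by (rule split_ee)
    define a' where "a' = a - ee i"
    have IH: "annz (delta act (xpow a') E) t" using less lt a'_def by simp
    have xa: "xpow a = xpow (ee i) * xpow a'" using eq a'_def by (simp add: xpow_mult add.commute)
    have fe: "delta act (xpow a) E = (\<lambda>\<eta> v. (\<lambda>\<eta> v. (\<lambda>\<eta> v. delta act (xpow (ee i)) (delta act (xpow a') E) \<eta> v)
        \<eta> v + (\<lambda>\<eta> v. act (xpow a') (delta act (xpow (ee i)) E \<eta> v)) \<eta> v) \<eta> v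
        + (\<lambda>\<eta> v. act (xpow (ee i)) (delta act (xpow a') E \<eta> v)) \<eta> v)"
      unfolding xa by (simp add: fun_eq_iff delta_prod)
    show ?thesis
      unfolding annz_def
    proof (intro allI impI)
      fix m :: "'n \<Rightarrow>\<^sub>0 nat" and p v assume tm: "t \<le> mi_abs m"
      have 1: "Lplus_act act (delta act (xpow (ee i)) (delta act (xpow a') E)) m p v = 0"
        using IH tm by (simp add: Phi_shift annz_def mi_abs_add)
      have 2: "Lplus_act act (delta act (xpow (ee i)) E) m p v = 0"
        using A tm by (simp add: Phi_shift annz_def mi_abs_add mi_abs_ee)
      have 3: "Lplus_act act (delta act (xpow a') E) m p v = 0"
        using IH tm by (simp add: annz_def)
      show "Lplus_act act (delta act (xpow a) E) m p v = 0"
        unfolding fe Phi_add Phi_act 1 2 3 by simp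
    qed
  qed
qed

lemma step_fwd:
  assumes G: "Good E" and A: "annz E (Suc t)"
  shows "annz (delta act f E) t"
  unfolding annz_def
proof (intro allI impI)
  fix m :: "'n \<Rightarrow>\<^sub>0 nat" and p v assume tm: "t \<le> mi_abs m"
  have eq: "delta act f E \<eta> v = (\<Sum>a\<in>Poly_Mapping.keys f. act (cst (Poly_Mapping.lookup f a)) (delta act (xpow a) E \<eta> v))"
    if d: "\<eta> \<in> Der" for \<eta> v
  proof -
    have "delta act f E \<eta> v = delta act (\<Sum>a\<in>Poly_Mapping.keys f. cst (Poly_Mapping.lookup f a) * xpow a) E \<eta> v"
      by (subst mpoly_expand[of f]) simp
    also have "\<dots> = (\<Sum>a\<in>Poly_Mapping.keys f. delta act (cst (Poly_Mapping.lookup f a) * xpow a) E \<eta> v)"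
      by (rule additive_sum[of "\<lambda>f. delta act f E \<eta> v"]) (rule delta_addf[OF G d])
    also have "\<dots> = (\<Sum>a\<in>Poly_Mapping.keys f. act (cst (Poly_Mapping.lookup f a)) (delta act (xpow a) E \<eta> v))"
      by (simp add: delta_cstf[OF G d])
    finally show ?thesis .
  qed
  have "Lplus_act act (delta act f E) m p v =
      Lplus_act act (\<lambda>\<eta> v. \<Sum>a\<in>Poly_Mapping.keys f. (\<lambda>a \<eta> v. act (cst (Poly_Mapping.lookup f a)) (delta act (xpow a) E \<eta> v)) a \<eta> v) m p v"
    by (rule Phi_cong) (simp add: eq)
  also have "\<dots> = 0"
    unfolding Phi_sum Phi_act
    using step_fwd_mono[OF G A] tm by (simp add: annz_def)
  finally show "Lplus_act act (delta act f E) m p v = 0" .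
qed

lemma step_iff: "Good E \<Longrightarrow> (\<forall>f. annz (delta act f E) t) \<longleftrightarrow> annz E (Suc t)"
  using step_back step_fwd by blast

lemma mi_choose_0' [simp]: "mi_choose m 0 = 1"
  by (simp add: mi_choose_def)

lemma base_iff:
  assumes G: "Good E"
  shows "annz E 0 \<longleftrightarrow> (\<forall>\<eta>\<in>Der. \<forall>v. E \<eta> v = 0)"
proof
  assume z: "\<forall>\<eta>\<in>Der. \<forall>v. E \<eta> v = 0"
  have "Lplus_act act E m p v = Lplus_act act (\<lambda>\<eta> v. 0) m p v" for m p v
    by (rule Phi_cong) (simp add: z)
  then show "annz E 0" by (simp add: annz_def Phi_zero)
next
  assume A: "annz E 0"
  have mono: "E (\<lambda>g. xpow b * pderiv_var p g) v = 0" for b p v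
  proof (induction "mi_abs b" arbitrary: b v rule: less_induct)
    case less
    have fS: "finite {k. mi_le k b}" by (rule finite_mi_le)
    have z: "0 \<in> {k. mi_le k b}" by (simp add: mi_le_def)
    have rest: "(\<Sum>k\<in>{k. mi_le k b} - {0}. act (cst ((-1) ^ mi_abs k * of_nat (mi_choose b k)) * xpow k)
            (E (\<lambda>g. xpow (b - k) * pderiv_var p g) v)) = 0"
    proof (rule sum.neutral, rule ballI)
      fix k assume k: "k \<in> {k. mi_le k b} - {0}"
      then have "0 < mi_abs k" using mi_abs_0 by auto
      moreover have "b = (b - k) + k"
        using k by (intro poly_mapping_eqI) (simp add: mi_le_def lookup_add lookup_minus)
      then have "mi_abs b = mi_abs (b - k) + mi_abs k" by (metis mi_abs_add)
      ultimately have "mi_abs (b - k) < mi_abs b" by simp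
      then show "act (cst ((-1) ^ mi_abs k * of_nat (mi_choose b k)) * xpow k)
            (E (\<lambda>g. xpow (b - k) * pderiv_var p g) v) = 0"
        using less by simp
    qed
    have "0 = Lplus_act act E b p v" using A by (simp add: annz_def)
    also have "\<dots> = E (\<lambda>g. xpow b * pderiv_var p g) v"
      unfolding Lplus_act_def
      by (simp add: sum.remove[OF fS z] rest) (simp add: mi_abs_def xpow_0 cst_1)
    finally show ?case by simp
  qed
  show "\<forall>\<eta>\<in>Der. \<forall>v. E \<eta> v = 0"
    using E_zero[OF G mono] by blast
qed

lemma main_iff: "Good E \<Longrightarrow> is_diff act s E \<longleftrightarrow> annz E (Suc s)"
proof (induction s arbitrary: E)
  case 0
  have "is_diff act 0 E \<longleftrightarrow> (\<forall>f. annz (delta act f E) 0)"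
    using base_iff[OF Good_delta[OF 0]] by simp
  also have "\<dots> \<longleftrightarrow> annz E (Suc 0)" by (rule step_iff[OF 0])
  finally show ?case .
next
  case (Suc s)
  have "is_diff act (Suc s) E \<longleftrightarrow> (\<forall>f. annz (delta act f E) (Suc s))"
    using Suc.IH[OF Good_delta[OF Suc.prems]] by simp
  also have "\<dots> \<longleftrightarrow> annz E (Suc (Suc s))" by (rule step_iff[OF Suc.prems])
  finally show ?case .
qed

end

theorem lemma4p2:
  fixes act :: "('n::finite, 'k::field_char_0) mpoly \<Rightarrow> 'm::ab_group_add \<Rightarrow> 'm"
    and rho :: "(('n, 'k) mpoly \<Rightarrow> ('n, 'k) mpoly) \<Rightarrow> 'm \<Rightarrow> 'm"
    and s :: nat
  assumes "alg_closed TYPE('k)"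
    and "AV_module act rho"
  shows "is_diff act s rho \<longleftrightarrow> annihilated_by_msLplus act rho s"
proof -
  have am: "A_module act" using assms(2) by (simp add: AV_module_def)
  interpret amod act by (rule amod.intro[OF am])
  have G: "Good rho" using assms(2) by (simp add: AV_module_def Good_def)
  show ?thesis
    using main_iff[OF G, of s] by (simp add: annz_def annihilated_by_msLplus_def)
qed

end
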